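(* Let $\Gamma$ be a compact tropical curve. There exists $c_\Gamma\in\mathbb{N}$, depending only on $\Gamma$, such that for every $D\in\operatorname{Div}(\Gamma)$, \[ r(D)\ \ge\ \deg(D)-c_\Gamma . \] (One may take $c_\Gamma=2(\#\mathcal{V}(\Gamma)+1)(\#\mathcal{E}(\Gamma)+1)$, where $\mathcal{V}(\Gamma)$ is the finite set of points of valence $\neq 2$ (a single chosen point if $\Gamma$ is a circle) and $\mathcal{E}(\Gamma)$ the set of edges between them.)
   Context: A compact tropical curve $\Gamma$ is a metric graph: obtained from a finite connected multigraph (loops and multiple edges allowed) by identifying each edge $e$ with a real interval $[0,\ell(e)]$, $\ell(e)>0$, glued at the vertices. The valence of a point $x$ is the number of tangent directions at $x$ (a loop through $x$ contributes two). $\operatorname{Div}(\Gamma)$ is the free abelian group on the points of $\Gamma$. $\operatorname{PL}(\Gamma)$ is the set of continuous functions $f:\Gamma\to\mathbb{R}$ which on each edge are piecewise affine with integer slopes and finitely many pieces. For $f\in\operatorname{PL}(\Gamma)$, $\operatorname{div}(f)=\sum_{x\in\Gamma}\big(-\sum_{\zeta}\partial f/\partial\zeta(x)\big)x$, the inner sum over the outgoing tangent directions $\zeta$ at $x$. $D\sim D'$ iff $D-D'=\operatorname{div}(f)$ for some $f\in\operatorname{PL}(\Gamma)$. $|D|=\{D'\ge0: D'\sim D\}$. The Baker--Norine rank is $r(D)=-1$ if $|D|=\varnothing$, otherwise $r(D)=\max\{d: |D-E|\ne\varnothing\text{ for all effective }E\text{ of degree }d\}$. *)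

theory Defs
  imports Complex_Main
begin

text \<open>A compact tropical curve (metric graph) is presented by a finite connected
multigraph (vertex set V, edge set E, endpoint maps src/tgt; loops and multiple
edges allowed) together with positive edge lengths len.  Edge e is identified with
the interval [0, len e], 0 glued to src e and len e glued to tgt e.\<close>

definition tropical_curve ::
  "'v set \<Rightarrow> 'e set \<Rightarrow> ('e \<Rightarrow> 'v) \<Rightarrow> ('e \<Rightarrow> 'v) \<Rightarrow> ('e \<Rightarrow> real) \<Rightarrow> bool" where
  "tropical_curve V E src tgt len \<longleftrightarrow>
     finite V \<and> finite E \<and> V \<noteq> {} \<and>
     (\<forall>e\<in>E. src e \<in> V \<and> tgt e \<in> V \<and> len e > 0) \<and>
     (\<forall>u\<in>V. \<forall>w\<in>V. (u, w) \<in> ({(src e, tgt e) | e. e \<in> E} \<union> {(tgt e, src e) | e. e \<in> E})\<^sup>*)"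

datatype ('v, 'e) pt = Vert 'v | Inner 'e real

definition points :: "'v set \<Rightarrow> 'e set \<Rightarrow> ('e \<Rightarrow> real) \<Rightarrow> ('v, 'e) pt set" where
  "points V E len = Vert ` V \<union> {Inner e t | e t. e \<in> E \<and> 0 < t \<and> t < len e}"

definition emb :: "('e \<Rightarrow> 'v) \<Rightarrow> ('e \<Rightarrow> 'v) \<Rightarrow> ('e \<Rightarrow> real) \<Rightarrow> 'e \<Rightarrow> real \<Rightarrow> ('v, 'e) pt" where
  "emb src tgt len e t = (if t = 0 then Vert (src e) else if t = len e then Vert (tgt e) else Inner e t)"

text \<open>Piecewise affine with integer slopes and finitely many pieces on [0, l]
(this includes continuity on [0, l]).\<close>
definition pw_affine_int :: "real \<Rightarrow> (real \<Rightarrow> real) \<Rightarrow> bool" where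
  "pw_affine_int l g \<longleftrightarrow>
     (\<exists>xs :: real list. length xs \<ge> 2 \<and> sorted_wrt (<) xs \<and> hd xs = 0 \<and> last xs = l \<and>
        (\<forall>i < length xs - 1. \<exists>m :: int. \<exists>b :: real.
            \<forall>t \<in> {xs ! i .. xs ! (i+1)}. g t = of_int m * t + b))"

text \<open>PL(\<Gamma>): restriction to every closed edge is continuous piecewise affine with
integer slopes (continuity on \<Gamma> follows since \<Gamma> is a finite union of closed edges).\<close>
definition is_PL ::
  "'e set \<Rightarrow> ('e \<Rightarrow> 'v) \<Rightarrow> ('e \<Rightarrow> 'v) \<Rightarrow> ('e \<Rightarrow> real) \<Rightarrow> (('v, 'e) pt \<Rightarrow> real) \<Rightarrow> bool" where
  "is_PL E src tgt len f \<longleftrightarrow> (\<forall>e\<in>E. pw_affine_int (len e) (\<lambda>t. f (emb src tgt len e t)))"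

definition slope_pos :: "(real \<Rightarrow> real) \<Rightarrow> real \<Rightarrow> real" where
  "slope_pos g t = Lim (at_right 0) (\<lambda>h. (g (t + h) - g t) / h)"

definition slope_neg :: "(real \<Rightarrow> real) \<Rightarrow> real \<Rightarrow> real" where
  "slope_neg g t = Lim (at_right 0) (\<lambda>h. (g (t - h) - g t) / h)"

text \<open>div(f)(x) = - (sum of outgoing slopes at x); a loop contributes two directions.\<close>
definition divf ::
  "'v set \<Rightarrow> 'e set \<Rightarrow> ('e \<Rightarrow> 'v) \<Rightarrow> ('e \<Rightarrow> 'v) \<Rightarrow> ('e \<Rightarrow> real) \<Rightarrow> (('v, 'e) pt \<Rightarrow> real)
     \<Rightarrow> ('v, 'e) pt \<Rightarrow> real" where
  "divf V E src tgt len f x =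
     (if x \<notin> points V E len then 0 else
      (case x of
         Vert v \<Rightarrow> - ((\<Sum>e\<in>{e\<in>E. src e = v}. slope_pos (\<lambda>t. f (emb src tgt len e t)) 0)
                     + (\<Sum>e\<in>{e\<in>E. tgt e = v}. slope_neg (\<lambda>t. f (emb src tgt len e t)) (len e)))
       | Inner e t \<Rightarrow> - (slope_pos (\<lambda>s. f (emb src tgt len e s)) t
                       + slope_neg (\<lambda>s. f (emb src tgt len e s)) t)))"

definition is_divisor :: "'v set \<Rightarrow> 'e set \<Rightarrow> ('e \<Rightarrow> real) \<Rightarrow> (('v, 'e) pt \<Rightarrow> int) \<Rightarrow> bool" where
  "is_divisor V E len D \<longleftrightarrow> finite {x. D x \<noteq> 0} \<and> {x. D x \<noteq> 0} \<subseteq> points V E len"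

definition deg :: "('a \<Rightarrow> int) \<Rightarrow> int" where
  "deg D = (\<Sum>x\<in>{x. D x \<noteq> 0}. D x)"

definition effective :: "('a \<Rightarrow> int) \<Rightarrow> bool" where
  "effective D \<longleftrightarrow> (\<forall>x. D x \<ge> 0)"

definition lin_equiv ::
  "'v set \<Rightarrow> 'e set \<Rightarrow> ('e \<Rightarrow> 'v) \<Rightarrow> ('e \<Rightarrow> 'v) \<Rightarrow> ('e \<Rightarrow> real)
     \<Rightarrow> (('v, 'e) pt \<Rightarrow> int) \<Rightarrow> (('v, 'e) pt \<Rightarrow> int) \<Rightarrow> bool" where
  "lin_equiv V E src tgt len D D' \<longleftrightarrow>
     (\<exists>f. is_PL E src tgt len f \<and>
          (\<forall>x\<in>points V E len. real_of_int (D x - D' x) = divf V E src tgt len f x))"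

definition linsys_nonempty ::
  "'v set \<Rightarrow> 'e set \<Rightarrow> ('e \<Rightarrow> 'v) \<Rightarrow> ('e \<Rightarrow> 'v) \<Rightarrow> ('e \<Rightarrow> real) \<Rightarrow> (('v, 'e) pt \<Rightarrow> int) \<Rightarrow> bool" where
  "linsys_nonempty V E src tgt len D \<longleftrightarrow>
     (\<exists>D'. is_divisor V E len D' \<and> effective D' \<and> lin_equiv V E src tgt len D' D)"

definition BN_rank ::
  "'v set \<Rightarrow> 'e set \<Rightarrow> ('e \<Rightarrow> 'v) \<Rightarrow> ('e \<Rightarrow> 'v) \<Rightarrow> ('e \<Rightarrow> real) \<Rightarrow> (('v, 'e) pt \<Rightarrow> int) \<Rightarrow> int" where
  "BN_rank V E src tgt len D =
     (if \<not> linsys_nonempty V E src tgt len D then -1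
      else int (GREATEST d :: nat. \<forall>F. is_divisor V E len F \<and> effective F \<and> deg F = int d
                 \<longrightarrow> linsys_nonempty V E src tgt len (\<lambda>x. D x - F x)))"

end

theory Submission
  imports Defs
begin


lemma slope_pos_affine:
  fixes g :: "real \<Rightarrow> real"
  assumes "t < b" and "\<forall>s\<in>{t..b}. g s = m * s + c"
  shows "slope_pos g t = m"
proof -
  have ev: "eventually (\<lambda>h. h \<in> {0<..<b-t}) (at_right (0::real))"
    using eventually_at_right_real assms(1) by simp
  have "eventually (\<lambda>h. (g (t + h) - g t) / h = m) (at_right 0)"
    using ev
  proof (rule eventually_mono)
    fix h :: real assume h: "h \<in> {0<..<b-t}"
    then have "g (t+h) = m*(t+h) + c" "g t = m*t+c" using assms by auto
    then show "(g (t + h) - g t) / h = m" using h by (simp add: field_simps)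
  qed
  then show ?thesis unfolding slope_pos_def
    by (intro tendsto_Lim) (auto intro: tendsto_eventually)
qed

lemma slope_neg_affine:
  fixes g :: "real \<Rightarrow> real"
  assumes "a < t" and "\<forall>s\<in>{a..t}. g s = m * s + c"
  shows "slope_neg g t = - m"
proof -
  have ev: "eventually (\<lambda>h. h \<in> {0<..<t-a}) (at_right (0::real))"
    using eventually_at_right_real assms(1) by simp
  have "eventually (\<lambda>h. (g (t - h) - g t) / h = -m) (at_right 0)"
    using ev
  proof (rule eventually_mono)
    fix h :: real assume h: "h \<in> {0<..<t-a}"
    then have "g (t-h) = m*(t-h) + c" "g t = m*t+c" using assms by auto
    then show "(g (t - h) - g t) / h = -m" using h by (simp add: field_simps)
  qed
  then show ?thesis unfolding slope_neg_def
    by (intro tendsto_Lim) (auto intro: tendsto_eventually)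
qed

lemma sorted_nth_less_iff:
  assumes "sorted_wrt (<) (xs::real list)" "i < length xs" "j < length xs"
  shows "xs ! i < xs ! j \<longleftrightarrow> i < j"
  using assms
  by (metis linorder_neqE_nat not_less_iff_gr_or_eq sorted_wrt_iff_nth_less)



lemma pl_telescope:
  fixes g :: "real \<Rightarrow> real"
  assumes pw: "pw_affine_int l g" and finT: "finite T" and Tsub: "T \<subseteq> {0<..<l}"
    and nz: "\<forall>t. 0<t \<and> t<l \<and> slope_pos g t + slope_neg g t \<noteq> 0 \<longrightarrow> t \<in> T"
  shows "slope_pos g 0 + slope_neg g l + (\<Sum>t\<in>T. slope_pos g t + slope_neg g t) = 0"
proof -
  obtain xs :: "real list" where len: "length xs \<ge> 2" and sw: "sorted_wrt (<) xs"
    and hd: "hd xs = 0" and lst: "last xs = l"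
    and pc: "\<forall>i < length xs - 1. \<exists>m :: int. \<exists>b :: real.
            \<forall>t \<in> {xs ! i .. xs ! (i+1)}. g t = of_int m * t + b"
    using pw unfolding pw_affine_int_def by blast
  define n where "n = length xs - 1"
  have n1: "n \<ge> 1" and nlen: "length xs = Suc n" using len by (auto simp: n_def)
  have "\<forall>i. \<exists>mb :: int \<times> real. i < n \<longrightarrow> (\<forall>t \<in> {xs ! i .. xs ! (i+1)}. g t = of_int (fst mb) * t + snd mb)"
    using pc by (auto simp: n_def)
  then obtain MB where MB: "\<And>i t. i < n \<Longrightarrow> t \<in> {xs ! i .. xs ! (i+1)} \<Longrightarrow> g t = of_int (fst (MB i)) * t + snd (MB i)"
    by metis
  define M where "M i = fst (MB i)" for i
  define B where "B i = snd (MB i)" for i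
  have aff: "\<And>i t. i < n \<Longrightarrow> t \<in> {xs ! i .. xs ! (i+1)} \<Longrightarrow> g t = of_int (M i) * t + B i"
    using MB by (simp add: M_def B_def)
  have x0: "xs ! 0 = 0" using hd nlen by (metis hd_conv_nth list.size(3) nat.distinct(1))
  have xn: "xs ! n = l" using lst nlen by (metis last_conv_nth Zero_not_Suc diff_Suc_1 list.size(3))
  have mono: "\<And>i j. i \<le> n \<Longrightarrow> j \<le> n \<Longrightarrow> xs ! i < xs ! j \<longleftrightarrow> i < j"
    using sorted_nth_less_iff[OF sw] nlen by simp
  have lt: "\<And>i. i < n \<Longrightarrow> xs ! i < xs ! (i+1)" using mono by simp
  have sp: "\<And>i. i < n \<Longrightarrow> slope_pos g (xs ! i) = of_int (M i)"
    using lt aff by (intro slope_pos_affine[where c = "B _"]) auto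
  have sn: "\<And>i. i < n \<Longrightarrow> slope_neg g (xs ! (i+1)) = - of_int (M i)"
    using lt aff by (intro slope_neg_affine[where c = "B _"]) auto
  define F where "F t = slope_pos g t + slope_neg g t" for t
  have mid: "F t = 0" if "i < n" "xs ! i < t" "t < xs ! (i+1)" for i t
  proof -
    have "slope_pos g t = of_int (M i)"
      using that aff by (intro slope_pos_affine[where b = "xs ! (i+1)" and c = "B i"]) auto
    moreover have "slope_neg g t = - of_int (M i)"
      using that aff by (intro slope_neg_affine[where a = "xs ! i" and c = "B i"]) auto
    ultimately show ?thesis by (simp add: F_def)
  qed
  have inset: "t \<in> set xs" if "0 < t" "t < l" "F t \<noteq> 0" for t
  proof (rule ccontr)
    assume nin: "t \<notin> set xs"
    define P where "P j = (j \<le> n \<and> xs ! j < t)" for j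
    define i where "i = (GREATEST j. P j)"
    have P0: "P 0" using that x0 by (simp add: P_def)
    have bnd: "\<And>y. P y \<Longrightarrow> y \<le> n" by (simp add: P_def)
    have Pi: "P i" unfolding i_def by (rule GreatestI_nat[of P 0 n, OF P0 bnd])
    have "i \<noteq> n" using Pi xn that by (auto simp: P_def)
    then have iln: "i < n" using Pi by (simp add: P_def)
    have "\<not> P (i+1)"
    proof
      assume "P (i+1)"
      then have "i + 1 \<le> i" unfolding i_def by (rule Greatest_le_nat[of P _ n, OF _ bnd])
      then show False by simp
    qed
    then have "xs ! (i+1) \<ge> t" using iln by (auto simp: P_def)
    moreover have "xs ! (i+1) \<noteq> t" using nin iln nlen by (metis Suc_eq_plus1 Suc_mono nth_mem)
    ultimately have "t < xs ! (i+1)" by simp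
    then have "F t = 0" using mid[OF iln] Pi by (simp add: P_def)
    then show False using that by simp
  qed
  define X where "X = (\<lambda>i. xs ! i) ` {1..<n}"
  define N where "N = {t \<in> T. F t \<noteq> 0}"
  have s1: "(\<Sum>t\<in>T. F t) = (\<Sum>t\<in>N. F t)"
    using finT by (intro sum.mono_neutral_right) (auto simp: N_def)
  have NX: "N \<subseteq> X"
  proof
    fix t assume "t \<in> N"
    then have t: "t \<in> T" "F t \<noteq> 0" by (auto simp: N_def)
    then have t0: "0 < t" "t < l" using Tsub by auto
    then have "t \<in> set xs" using inset t by simp
    then obtain j where j: "j < length xs" "xs ! j = t" by (meson in_set_conv_nth)
    have "j \<noteq> 0" using j t0 x0 by (metis less_irrefl)
    moreover have "j \<noteq> n" using j t0 xn by auto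
    ultimately show "t \<in> X" using j nlen unfolding X_def by force
  qed
  have Xsub: "X \<subseteq> {0<..<l}"
  proof
    fix t assume "t \<in> X"
    then obtain j where j: "1 \<le> j" "j < n" "t = xs ! j" by (auto simp: X_def)
    have "xs ! 0 < xs ! j" "xs ! j < xs ! n" using mono j by auto
    then show "t \<in> {0<..<l}" using j x0 xn by simp
  qed
  have s2: "(\<Sum>t\<in>X. F t) = (\<Sum>t\<in>N. F t)"
  proof (rule sum.mono_neutral_right)
    show "finite X" by (simp add: X_def)
    show "N \<subseteq> X" by (rule NX)
    show "\<forall>i\<in>X - N. F i = 0"
    proof
      fix t assume t: "t \<in> X - N"
      then have t0: "0 < t" "t < l" using Xsub by auto
      show "F t = 0"
      proof (rule ccontr)
        assume "F t \<noteq> 0"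
        then have "t \<in> T" using nz t0 by (simp add: F_def)
        then show False using t \<open>F t \<noteq> 0\<close> by (simp add: N_def)
      qed
    qed
  qed
  have inj: "inj_on (\<lambda>i. xs ! i) {1..<n}"
  proof (rule inj_onI)
    fix i j assume "i \<in> {1..<n}" "j \<in> {1..<n}" "xs ! i = xs ! j"
    then have a: "i \<le> n" "j \<le> n" "xs ! i = xs ! j" by auto
    show "i = j"
    proof (rule ccontr)
      assume "i \<noteq> j"
      then have "i < j \<or> j < i" by arith
      then show False using mono[of i j] mono[of j i] a by auto
    qed
  qed
  have s3: "(\<Sum>t\<in>X. F t) = (\<Sum>i\<in>{1..<n}. F (xs ! i))"
    unfolding X_def by (rule sum.reindex[OF inj, unfolded comp_def])
  have Fi: "F (xs ! i) = of_int (M i) - of_int (M (i - 1))" if "i \<in> {1..<n}" for i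
  proof -
    have "slope_neg g (xs ! (i - 1 + 1)) = - of_int (M (i - 1))" using that by (intro sn) auto
    then show ?thesis using sp[of i] that by (simp add: F_def)
  qed
  have "(\<Sum>i\<in>{1..<n}. F (xs ! i)) = (\<Sum>i\<in>{1..<n}. of_int (M i) - of_int (M (i - 1)) :: real)"
    using Fi by (rule sum.cong[OF refl])
  also have "\<dots> = (\<Sum>j<n-1. of_int (M (Suc j)) - of_int (M j) :: real)"
  proof -
    have "Suc ` {..<n-1} = {1..n-1}" by (rule image_Suc_lessThan)
    moreover have "{1..n-1} = {1..<n}" using n1 by auto
    ultimately have "{1..<n} = Suc ` {..<n-1}" by simp
    then show ?thesis by (simp add: sum.reindex)
  qed
  also have "\<dots> = of_int (M (n-1)) - of_int (M 0)"
    by (rule sum_lessThan_telescope)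
  finally have s4: "(\<Sum>i\<in>{1..<n}. F (xs ! i)) = of_int (M (n-1)) - of_int (M 0)" .
  have e0: "slope_pos g 0 = of_int (M 0)" using sp[of 0] n1 x0 by simp
  have el: "slope_neg g l = - of_int (M (n-1))" using sn[of "n-1"] n1 xn by simp
  show ?thesis using s1 s2 s3 s4 e0 el by (simp add: F_def)
qed



lemma deg_superset:
  assumes "finite S" "{x. D x \<noteq> 0} \<subseteq> S"
  shows "deg D = (\<Sum>x\<in>S. D x)"
  unfolding deg_def using assms by (intro sum.mono_neutral_left) auto

lemma Inner_in_points[simp]: "Inner e t \<in> points V E len \<longleftrightarrow> e \<in> E \<and> 0 < t \<and> t < len e"
  by (auto simp: points_def)

lemma Vert_in_points[simp]: "Vert v \<in> points V E len \<longleftrightarrow> v \<in> V"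
  by (auto simp: points_def)

lemma supp_decomp:
  fixes Z :: "('v,'e) pt \<Rightarrow> 'a::comm_monoid_add"
  assumes finV: "finite V" and finE: "finite E"
    and finZ: "finite {x. Z x \<noteq> 0}" and subZ: "{x. Z x \<noteq> 0} \<subseteq> points V E len"
  shows "(\<Sum>x\<in>{x. Z x \<noteq> 0}. Z x) = (\<Sum>v\<in>V. Z (Vert v)) + (\<Sum>e\<in>E. \<Sum>p\<in>{p. Z (Inner e p) \<noteq> 0}. Z (Inner e p))"
proof -
  define S where "S = {x. Z x \<noteq> 0}"
  define Se where "Se e = {p. Z (Inner e p) \<noteq> 0}" for e
  have finSe: "finite (Se e)" for e
  proof -
    have "Se e = Inner e -` S" by (auto simp: Se_def S_def)
    moreover have "finite (Inner e -` S)" using finZ by (intro finite_vimageI) (auto simp: S_def inj_def)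
    ultimately show ?thesis by simp
  qed
  define A :: "('v,'e) pt set" where "A = Vert ` V"
  define B :: "('v,'e) pt set" where "B = (\<Union>e\<in>E. Inner e ` Se e)"
  have finA: "finite A" using finV by (simp add: A_def)
  have finB: "finite B" using finE finSe by (simp add: B_def)
  have SAB: "S \<subseteq> A \<union> B"
  proof
    fix x assume x: "x \<in> S"
    then have xp: "x \<in> points V E len" using subZ by (auto simp: S_def)
    show "x \<in> A \<union> B"
    proof (cases x)
      case (Vert v) then show ?thesis using xp by (auto simp: A_def)
    next
      case (Inner e t) then show ?thesis using xp x by (auto simp: B_def Se_def S_def)
    qed
  qed
  have "(\<Sum>x\<in>S. Z x) = (\<Sum>x\<in>A \<union> B. Z x)"
    using finA finB SAB by (intro sum.mono_neutral_left) (auto simp: S_def)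
  also have "\<dots> = (\<Sum>x\<in>A. Z x) + (\<Sum>x\<in>B. Z x)"
    using finA finB by (intro sum.union_disjoint) (auto simp: A_def B_def)
  also have "(\<Sum>x\<in>A. Z x) = (\<Sum>v\<in>V. Z (Vert v))"
    unfolding A_def by (subst sum.reindex) (auto simp: inj_on_def)
  also have "(\<Sum>x\<in>B. Z x) = (\<Sum>e\<in>E. \<Sum>x\<in>Inner e ` Se e. Z x)"
    unfolding B_def using finE finSe by (intro sum.UNION_disjoint) auto
  also have "\<dots> = (\<Sum>e\<in>E. \<Sum>p\<in>Se e. Z (Inner e p))"
    by (intro sum.cong refl, subst sum.reindex) (auto simp: inj_on_def)
  finally show ?thesis by (simp add: S_def Se_def)
qed

lemma sum_group_src:
  fixes h :: "'e \<Rightarrow> 'a::comm_monoid_add"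
  assumes "finite V" "finite E" "\<forall>e\<in>E. s e \<in> V"
  shows "(\<Sum>v\<in>V. \<Sum>e\<in>{e\<in>E. s e = v}. h e) = (\<Sum>e\<in>E. h e)"
  using sum.group[of E V s h] assms by auto

lemma deg_principal:
  assumes finV: "finite V" and finE: "finite E" and st: "\<forall>e\<in>E. src e \<in> V \<and> tgt e \<in> V"
    and D1: "is_divisor V E len D1" and D2: "is_divisor V E len D2"
    and PL: "is_PL E src tgt len f"
    and eq: "\<forall>x\<in>points V E len. real_of_int (D1 x - D2 x) = divf V E src tgt len f x"
  shows "deg D1 = deg D2"
proof -
  define Z where "Z x = D1 x - D2 x" for x
  define S where "S = {x. D1 x \<noteq> 0} \<union> {x. D2 x \<noteq> 0}"
  have finS: "finite S" using D1 D2 by (auto simp: S_def is_divisor_def)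
  have Spts: "S \<subseteq> points V E len" using D1 D2 by (auto simp: S_def is_divisor_def)
  have ZS: "{x. Z x \<noteq> 0} \<subseteq> S" by (auto simp: Z_def S_def)
  have "deg D1 - deg D2 = (\<Sum>x\<in>S. D1 x) - (\<Sum>x\<in>S. D2 x)"
    using deg_superset[OF finS, of D1] deg_superset[OF finS, of D2] by (auto simp: S_def)
  also have "\<dots> = (\<Sum>x\<in>S. Z x)" by (simp add: Z_def sum_subtractf)
  also have "\<dots> = (\<Sum>x\<in>{x. Z x \<noteq> 0}. Z x)"
    using finS ZS by (intro sum.mono_neutral_right) auto
  also have "\<dots> = (\<Sum>v\<in>V. Z (Vert v)) + (\<Sum>e\<in>E. \<Sum>p\<in>{p. Z (Inner e p) \<noteq> 0}. Z (Inner e p))"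
    using finS ZS Spts by (intro supp_decomp finV finE) (auto intro: finite_subset)
  finally have d: "deg D1 - deg D2 = \<dots>" .
  define g where "g e = (\<lambda>s. f (emb src tgt len e s))" for e
  define Se where "Se e = {p. Z (Inner e p) \<noteq> 0}" for e
  have vert: "real_of_int (Z (Vert v)) = - ((\<Sum>e\<in>{e\<in>E. src e = v}. slope_pos (g e) 0)
                     + (\<Sum>e\<in>{e\<in>E. tgt e = v}. slope_neg (g e) (len e)))" if "v \<in> V" for v
    using eq[rule_format, of "Vert v"] that by (simp add: Z_def divf_def g_def)
  have Sep: "p \<in> Se e \<Longrightarrow> e \<in> E \<Longrightarrow> 0 < p \<and> p < len e" for e p
    using ZS Spts by (force simp: Se_def)
  have inner: "real_of_int (Z (Inner e p)) = - (slope_pos (g e) p + slope_neg (g e) p)"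
    if "e \<in> E" "p \<in> Se e" for e p
    using eq[rule_format, of "Inner e p"] that Sep[OF that(2,1)] by (simp add: Z_def divf_def g_def)
  have tele: "slope_pos (g e) 0 + slope_neg (g e) (len e) + (\<Sum>t\<in>Se e. slope_pos (g e) t + slope_neg (g e) t) = 0"
    if e: "e \<in> E" for e
  proof (rule pl_telescope)
    show "pw_affine_int (len e) (g e)" using PL e by (simp add: is_PL_def g_def)
    have "Se e = Inner e -` {x. Z x \<noteq> 0}" by (auto simp: Se_def)
    moreover have "finite (Inner e -` {x. Z x \<noteq> 0})"
      using finS ZS by (intro finite_vimageI) (auto intro: finite_subset simp: inj_def)
    ultimately show "finite (Se e)" by simp
    show "Se e \<subseteq> {0<..<len e}" using Sep e by auto
    show "\<forall>t. 0 < t \<and> t < len e \<and> slope_pos (g e) t + slope_neg (g e) t \<noteq> 0 \<longrightarrow> t \<in> Se e"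
    proof (intro allI impI)
      fix t assume t: "0 < t \<and> t < len e \<and> slope_pos (g e) t + slope_neg (g e) t \<noteq> 0"
      then have "real_of_int (Z (Inner e t)) \<noteq> 0"
        using eq[rule_format, of "Inner e t"] e by (simp add: Z_def divf_def g_def)
      then show "t \<in> Se e" by (simp add: Se_def)
    qed
  qed
  have "real_of_int (deg D1 - deg D2) = (\<Sum>v\<in>V. real_of_int (Z (Vert v))) + (\<Sum>e\<in>E. \<Sum>p\<in>Se e. real_of_int (Z (Inner e p)))"
    unfolding d Se_def by simp
  also have "(\<Sum>v\<in>V. real_of_int (Z (Vert v))) = - ((\<Sum>e\<in>E. slope_pos (g e) 0) + (\<Sum>e\<in>E. slope_neg (g e) (len e)))"
  proof -
    have "(\<Sum>v\<in>V. real_of_int (Z (Vert v))) = - ((\<Sum>v\<in>V. \<Sum>e\<in>{e\<in>E. src e = v}. slope_pos (g e) 0)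
                     + (\<Sum>v\<in>V. \<Sum>e\<in>{e\<in>E. tgt e = v}. slope_neg (g e) (len e)))"
      using vert by (simp add: sum_subtractf sum_negf)
    also have "\<dots> = - ((\<Sum>e\<in>E. slope_pos (g e) 0) + (\<Sum>e\<in>E. slope_neg (g e) (len e)))"
      using st finV finE by (simp add: sum_group_src)
    finally show ?thesis .
  qed
  also have "(\<Sum>e\<in>E. \<Sum>p\<in>Se e. real_of_int (Z (Inner e p))) = (\<Sum>e\<in>E. slope_pos (g e) 0 + slope_neg (g e) (len e))"
  proof (rule sum.cong[OF refl])
    fix e assume e: "e \<in> E"
    have "(\<Sum>p\<in>Se e. real_of_int (Z (Inner e p))) = (\<Sum>p\<in>Se e. - (slope_pos (g e) p + slope_neg (g e) p))"
      using inner e by (intro sum.cong) auto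
    also have "\<dots> = - (\<Sum>p\<in>Se e. slope_pos (g e) p + slope_neg (g e) p)" by (rule sum_negf)
    also have "\<dots> = slope_pos (g e) 0 + slope_neg (g e) (len e)"
      using tele[OF e] by linarith
    finally show "(\<Sum>p\<in>Se e. real_of_int (Z (Inner e p))) = slope_pos (g e) 0 + slope_neg (g e) (len e)" .
  qed
  finally have "real_of_int (deg D1 - deg D2) = 0" by (simp add: sum.distrib)
  then show ?thesis by simp
qed



definition rampG :: "('e \<Rightarrow> 'v) \<Rightarrow> ('v \<Rightarrow> real) \<Rightarrow> ('e \<Rightarrow> real \<Rightarrow> int) \<Rightarrow> ('e \<Rightarrow> real set) \<Rightarrow> 'e \<Rightarrow> real \<Rightarrow> real" where
  "rampG src h c P e t = h (src e) + (\<Sum>p\<in>P e. real_of_int (c e p) * max 0 (t - p))"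

definition ramp_fun :: "('e \<Rightarrow> 'v) \<Rightarrow> ('v \<Rightarrow> real) \<Rightarrow> ('e \<Rightarrow> real \<Rightarrow> int) \<Rightarrow> ('e \<Rightarrow> real set) \<Rightarrow> ('v,'e) pt \<Rightarrow> real" where
  "ramp_fun src h c P x = (case x of Vert v \<Rightarrow> h v | Inner e t \<Rightarrow> rampG src h c P e t)"

lemma ramp_emb:
  assumes Psub: "P e \<subseteq> {0..<len e}" and finP: "finite (P e)"
    and cons: "h (src e) + (\<Sum>p\<in>P e. real_of_int (c e p) * (len e - p)) = h (tgt e)"
    and s: "0 \<le> s" "s \<le> len e"
  shows "ramp_fun src h c P (emb src tgt len e s) = rampG src h c P e s"
proof -
  consider "s = 0" | "s \<noteq> 0" "s = len e" | "s \<noteq> 0" "s \<noteq> len e" by blast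
  then show ?thesis
  proof cases
    case 1
    have "(\<Sum>p\<in>P e. real_of_int (c e p) * max 0 (0 - p)) = 0"
      using Psub by (intro sum.neutral) auto
    then show ?thesis using 1 by (simp add: emb_def ramp_fun_def rampG_def)
  next
    case 2
    have "(\<Sum>p\<in>P e. real_of_int (c e p) * max 0 (len e - p)) = (\<Sum>p\<in>P e. real_of_int (c e p) * (len e - p))"
      using Psub by (intro sum.cong) auto
    then show ?thesis using 2 cons by (simp add: emb_def ramp_fun_def rampG_def)
  next
    case 3
    then show ?thesis by (simp add: emb_def ramp_fun_def)
  qed
qed

lemma ramp_affine:
  assumes Psub: "P e \<subseteq> {0..<len e}" and finP: "finite (P e)"
    and cons: "h (src e) + (\<Sum>p\<in>P e. real_of_int (c e p) * (len e - p)) = h (tgt e)"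
    and ab: "0 \<le> a" "a < b" "b \<le> len e"
    and nob: "\<forall>p\<in>P e. \<not> (a < p \<and> p < b)"
  shows "\<forall>s\<in>{a..b}. ramp_fun src h c P (emb src tgt len e s)
     = real_of_int (\<Sum>p\<in>{p\<in>P e. p \<le> a}. c e p) * s + (h (src e) - (\<Sum>p\<in>{p\<in>P e. p \<le> a}. real_of_int (c e p) * p))"
proof
  fix s assume s: "s \<in> {a..b}"
  have "ramp_fun src h c P (emb src tgt len e s) = rampG src h c P e s"
    using s ab by (intro ramp_emb[where P=P and e=e and len=len and c=c and h=h and src=src and tgt=tgt, OF Psub finP cons]) auto
  also have "\<dots> = h (src e) + (\<Sum>p\<in>P e. if p \<le> a then real_of_int (c e p) * (s - p) else 0)"
    unfolding rampG_def
  proof (intro arg_cong2[where f="(+)"] refl sum.cong)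
    fix p assume p: "p \<in> P e"
    show "real_of_int (c e p) * max 0 (s - p) = (if p \<le> a then real_of_int (c e p) * (s - p) else 0)"
    proof (cases "p \<le> a")
      case True then show ?thesis using s by auto
    next
      case False then have "b \<le> p" using nob p by force
      then show ?thesis using s False by auto
    qed
  qed
  also have "\<dots> = h (src e) + (\<Sum>p\<in>{p\<in>P e. p \<le> a}. real_of_int (c e p) * (s - p))"
    using finP by (simp add: sum.inter_filter)
  also have "\<dots> = real_of_int (\<Sum>p\<in>{p\<in>P e. p \<le> a}. c e p) * s + (h (src e) - (\<Sum>p\<in>{p\<in>P e. p \<le> a}. real_of_int (c e p) * p))"
    by (simp add: right_diff_distrib sum_subtractf sum_distrib_right)
  finally show "ramp_fun src h c P (emb src tgt len e s)
     = real_of_int (\<Sum>p\<in>{p\<in>P e. p \<le> a}. c e p) * s + (h (src e) - (\<Sum>p\<in>{p\<in>P e. p \<le> a}. real_of_int (c e p) * p))" .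
qed



lemma ramp_slope_pos:
  assumes Psub: "P e \<subseteq> {0..<len e}" and finP: "finite (P e)"
    and cons: "h (src e) + (\<Sum>p\<in>P e. real_of_int (c e p) * (len e - p)) = h (tgt e)"
    and t: "0 \<le> t" "t < len e"
  shows "slope_pos (\<lambda>s. ramp_fun src h c P (emb src tgt len e s)) t = real_of_int (\<Sum>p\<in>{p\<in>P e. p \<le> t}. c e p)"
proof -
  define Q where "Q = insert (len e) {p\<in>P e. t < p}"
  define b where "b = Min Q"
  have finQ: "finite Q" "Q \<noteq> {}" using finP by (auto simp: Q_def)
  have bt: "t < b" unfolding b_def using finQ t by (subst Min_gr_iff) (auto simp: Q_def)
  have bl: "b \<le> len e" unfolding b_def using finQ by (intro Min_le) (auto simp: Q_def)
  have nob: "\<forall>p\<in>P e. \<not> (t < p \<and> p < b)"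
  proof (intro ballI notI)
    fix p assume "p \<in> P e" "t < p \<and> p < b"
    then have "p \<in> Q" by (auto simp: Q_def)
    then have "b \<le> p" unfolding b_def using finQ by (intro Min_le) auto
    then show False using \<open>t < p \<and> p < b\<close> by simp
  qed
  show ?thesis
    by (rule slope_pos_affine[OF bt ramp_affine[where P=P and e=e and len=len and c=c and h=h and src=src and tgt=tgt, OF Psub finP cons t(1) bt bl nob]])
qed

lemma ramp_slope_neg:
  assumes Psub: "P e \<subseteq> {0..<len e}" and finP: "finite (P e)"
    and cons: "h (src e) + (\<Sum>p\<in>P e. real_of_int (c e p) * (len e - p)) = h (tgt e)"
    and t: "0 < t" "t \<le> len e"
  shows "slope_neg (\<lambda>s. ramp_fun src h c P (emb src tgt len e s)) t = - real_of_int (\<Sum>p\<in>{p\<in>P e. p < t}. c e p)"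
proof -
  define Q where "Q = insert 0 {p\<in>P e. p < t}"
  define a where "a = Max Q"
  have finQ: "finite Q" "Q \<noteq> {}" using finP by (auto simp: Q_def)
  have at: "a < t" unfolding a_def using finQ t by (subst Max_less_iff) (auto simp: Q_def)
  have a0: "0 \<le> a" unfolding a_def using finQ by (intro Max_ge) (auto simp: Q_def)
  have nob: "\<forall>p\<in>P e. \<not> (a < p \<and> p < t)"
  proof (intro ballI notI)
    fix p assume "p \<in> P e" "a < p \<and> p < t"
    then have "p \<in> Q" by (auto simp: Q_def)
    then have "p \<le> a" unfolding a_def using finQ by (intro Max_ge) auto
    then show False using \<open>a < p \<and> p < t\<close> by simp
  qed
  have eqs: "{p\<in>P e. p \<le> a} = {p\<in>P e. p < t}"
    using nob at by force
  show ?thesis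
    using slope_neg_affine[OF at ramp_affine[where P=P and e=e and len=len and c=c and h=h and src=src and tgt=tgt, OF Psub finP cons a0 at t(2) nob]]
    by (simp add: eqs)
qed

lemma sorted_hd:
  fixes xs :: "real list"
  assumes "sorted_wrt (<) xs" "lo \<in> set xs" "\<forall>x\<in>set xs. lo \<le> x"
  shows "hd xs = lo"
proof -
  obtain y ys where xs: "xs = y # ys" using assms(2) by (cases xs) auto
  have "\<forall>z\<in>set ys. y < z" using assms(1) xs by simp
  moreover have "lo \<le> y" using assms(3) xs by simp
  ultimately show ?thesis using assms(2) xs by force
qed

lemma sorted_last:
  fixes xs :: "real list"
  assumes "sorted_wrt (<) xs" "hi \<in> set xs" "\<forall>x\<in>set xs. x \<le> hi"
  shows "last xs = hi"
proof -
  obtain ys y where xs: "xs = ys @ [y]" using assms(2) by (metis rev_exhaust empty_iff list.set(1))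
  have "\<forall>z\<in>set ys. z < y" using assms(1) xs by (simp add: sorted_wrt_append)
  moreover have "y \<le> hi" using assms(3) xs by simp
  ultimately show ?thesis using assms(2) xs by force
qed

lemma ramp_PL:
  assumes lpos: "\<forall>e\<in>E. len e > 0" and Psub: "\<forall>e\<in>E. P e \<subseteq> {0..<len e}" and finP: "\<forall>e\<in>E. finite (P e)"
    and P0: "\<forall>e\<in>E. 0 \<in> P e"
    and cons: "\<forall>e\<in>E. h (src e) + (\<Sum>p\<in>P e. real_of_int (c e p) * (len e - p)) = h (tgt e)"
  shows "is_PL E src tgt len (ramp_fun src h c P)"
  unfolding is_PL_def
proof
  fix e assume e: "e \<in> E"
  define S where "S = insert (len e) (P e)"
  define xs where "xs = sorted_list_of_set S"
  have finS: "finite S" using finP e by (simp add: S_def)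
  have setxs: "set xs = S" using finS by (simp add: xs_def)
  have sw: "sorted_wrt (<) xs" by (simp add: xs_def strict_sorted_list_of_set)
  have sub: "P e \<subseteq> {0..<len e}" using Psub e by blast
  have Sr: "\<forall>x\<in>S. 0 \<le> x \<and> x \<le> len e" using sub e lpos by (force simp: S_def)
  have hd: "hd xs = 0" and lst: "last xs = len e"
    using sorted_hd[OF sw, of 0] sorted_last[OF sw, of "len e"] setxs Sr P0 e by (auto simp: S_def)
  have "card S \<ge> 2"
  proof -
    have "{0, len e} \<subseteq> S" using P0 e by (auto simp: S_def)
    then have "card {0, len e} \<le> card S" using finS by (intro card_mono) auto
    then show ?thesis using lpos e by auto
  qed
  then have len2: "length xs \<ge> 2" using finS by (simp add: xs_def)
  have mono: "\<And>i j. i < length xs \<Longrightarrow> j < length xs \<Longrightarrow> xs ! i < xs ! j \<longleftrightarrow> i < j"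
    using sorted_nth_less_iff[OF sw] by simp
  show "pw_affine_int (len e) (\<lambda>t. ramp_fun src h c P (emb src tgt len e t))"
    unfolding pw_affine_int_def
  proof (rule exI[of _ xs], intro conjI allI impI)
    show "2 \<le> length xs" "sorted_wrt (<) xs" "hd xs = 0" "last xs = len e" by fact+
    fix i assume i: "i < length xs - 1"
    define a where "a = xs ! i"
    define b where "b = xs ! (i+1)"
    have ab: "a < b" using mono i by (simp add: a_def b_def)
    have aS: "a \<in> S" "b \<in> S" using i setxs by (auto simp: a_def b_def)
    have a0: "0 \<le> a" "b \<le> len e" using aS Sr by auto
    have nob: "\<forall>p\<in>P e. \<not> (a < p \<and> p < b)"
    proof (intro ballI notI)
      fix p assume p: "p \<in> P e" "a < p \<and> p < b"
      then have "p \<in> set xs" using setxs by (simp add: S_def)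
      then obtain j where j: "j < length xs" "xs ! j = p" by (meson in_set_conv_nth)
      have "i < j" using mono[of i j] j p i by (simp add: a_def)
      moreover have "j < i + 1" using mono[of j "i+1"] j p i by (simp add: b_def)
      ultimately show False by simp
    qed
    have "P e \<subseteq> {0..<len e}" "finite (P e)" "h (src e) + (\<Sum>p\<in>P e. real_of_int (c e p) * (len e - p)) = h (tgt e)"
      using Psub finP cons e by auto
    from ramp_affine[where P=P and e=e and len=len and c=c and h=h and src=src and tgt=tgt, OF this a0(1) ab a0(2) nob]
    show "\<exists>m::int. \<exists>b'. \<forall>t\<in>{xs ! i..xs ! (i + 1)}. ramp_fun src h c P (emb src tgt len e t) = of_int m * t + b'"
      unfolding a_def b_def by blast
  qed
qed

lemma ramp_divf_vert:
  assumes lpos: "\<forall>e\<in>E. len e > 0" and Psub: "\<forall>e\<in>E. P e \<subseteq> {0..<len e}" and finP: "\<forall>e\<in>E. finite (P e)"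
    and P0: "\<forall>e\<in>E. 0 \<in> P e"
    and cons: "\<forall>e\<in>E. h (src e) + (\<Sum>p\<in>P e. real_of_int (c e p) * (len e - p)) = h (tgt e)"
    and v: "v \<in> V"
  shows "divf V E src tgt len (ramp_fun src h c P) (Vert v) =
     - (\<Sum>e\<in>{e\<in>E. src e = v}. real_of_int (c e 0)) + (\<Sum>e\<in>{e\<in>E. tgt e = v}. real_of_int (\<Sum>p\<in>P e. c e p))"
proof -
  have s1: "slope_pos (\<lambda>s. ramp_fun src h c P (emb src tgt len e s)) 0 = real_of_int (c e 0)" if "e \<in> E" for e
  proof -
    have "{p\<in>P e. p \<le> 0} = {0}" using Psub P0 that by force
    then show ?thesis
      using ramp_slope_pos[where P=P and e=e and len=len and c=c and h=h and src=src and tgt=tgt and t=0] that Psub finP cons lpos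
      by simp
  qed
  have s2: "slope_neg (\<lambda>s. ramp_fun src h c P (emb src tgt len e s)) (len e) = - real_of_int (\<Sum>p\<in>P e. c e p)" if "e \<in> E" for e
  proof -
    have "{p\<in>P e. p < len e} = P e" using Psub that by force
    then show ?thesis
      using ramp_slope_neg[where P=P and e=e and len=len and c=c and h=h and src=src and tgt=tgt and t="len e"] that Psub finP cons lpos
      by simp
  qed
  show ?thesis using v s1 s2 by (simp add: divf_def sum_negf)
qed

lemma ramp_divf_inner:
  assumes Psub: "P e \<subseteq> {0..<len e}" and finP: "finite (P e)"
    and cons: "h (src e) + (\<Sum>p\<in>P e. real_of_int (c e p) * (len e - p)) = h (tgt e)"
    and e: "e \<in> E" and t: "0 < t" "t < len e"
  shows "divf V E src tgt len (ramp_fun src h c P) (Inner e t) = - (if t \<in> P e then real_of_int (c e t) else 0)"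
proof -
  have sp: "slope_pos (\<lambda>s. ramp_fun src h c P (emb src tgt len e s)) t = real_of_int (\<Sum>p\<in>{p\<in>P e. p \<le> t}. c e p)"
    using ramp_slope_pos[where P=P and e=e and len=len and c=c and h=h and src=src and tgt=tgt and t=t] Psub finP cons t by simp
  have sn: "slope_neg (\<lambda>s. ramp_fun src h c P (emb src tgt len e s)) t = - real_of_int (\<Sum>p\<in>{p\<in>P e. p < t}. c e p)"
    using ramp_slope_neg[where P=P and e=e and len=len and c=c and h=h and src=src and tgt=tgt and t=t] Psub finP cons t by simp
  have split: "(\<Sum>p\<in>{p\<in>P e. p \<le> t}. c e p) = (\<Sum>p\<in>{p\<in>P e. p < t}. c e p) + (if t \<in> P e then c e t else 0)"
  proof (cases "t \<in> P e")
    case True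
    then have "{p\<in>P e. p \<le> t} = insert t {p\<in>P e. p < t}" by force
    then show ?thesis using True finP by simp
  next
    case False
    then have "{p\<in>P e. p \<le> t} = {p\<in>P e. p < t}" by (force simp: le_less)
    then show ?thesis using False by simp
  qed
  show ?thesis using e t sp sn split by (simp add: divf_def)
qed



definition wrel :: "'v set \<Rightarrow> ('v \<Rightarrow> 'v \<Rightarrow> real) \<Rightarrow> ('v \<times> 'v) set" where
  "wrel V w = {(a, b). a \<in> V \<and> b \<in> V \<and> a \<noteq> b \<and> 0 < w a b}"

lemma lap_solve_aux:
  fixes w :: "'v \<Rightarrow> 'v \<Rightarrow> real"
  assumes "card V = n" "finite V" "\<forall>u\<in>V. \<forall>v\<in>V. w u v = w v u" "\<forall>u\<in>V. \<forall>v\<in>V. 0 \<le> w u v"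
    "\<forall>u\<in>V. \<forall>v\<in>V. (u,v) \<in> (wrel V w)\<^sup>*" "(\<Sum>v\<in>V. b v) = 0"
  shows "\<exists>h. \<forall>v\<in>V. (\<Sum>u\<in>V. w v u * (h v - h u)) = b v"
  using assms
proof (induction n arbitrary: V w b rule: less_induct)
  case (less n)
  note finV = less.prems(2) and sym = less.prems(3) and nn = less.prems(4)
    and conn = less.prems(5) and sb = less.prems(6)
  show ?case
  proof (cases "card V \<le> 1")
    case True
    have "b v = 0" if "v \<in> V" for v
    proof -
      have "\<forall>a\<in>V. \<forall>c\<in>V. a = c" using True finV card_le_Suc0_iff_eq[OF finV] by simp
      then have "V = {v}" using that by blast
      then show ?thesis using sb by simp
    qed
    then show ?thesis by (intro exI[of _ "\<lambda>_. 0"]) simp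
  next
    case False
    then have "V \<noteq> {}" by auto
    then obtain z where zV: "z \<in> V" by blast
    define V' where "V' = V - {z}"
    have finV': "finite V'" using finV by (simp add: V'_def)
    have "card V > 0" using zV finV card_gt_0_iff by blast
    then have cardV': "card V' < n" using zV finV less.prems(1) by (simp add: V'_def)
    obtain u where uV': "u \<in> V'"
    proof -
      have "card V' \<noteq> 0" using False zV finV by (simp add: V'_def)
      then have "V' \<noteq> {}" by auto
      then show ?thesis using that by blast
    qed
    define Wz where "Wz = (\<Sum>u\<in>V'. w z u)"
    have Wzpos: "0 < Wz"
    proof -
      have "(z, u) \<in> (wrel V w)\<^sup>*" using conn zV uV' by (auto simp: V'_def)
      moreover have "z \<noteq> u" using uV' by (auto simp: V'_def)
      ultimately have "\<exists>y. (z, y) \<in> wrel V w" by (auto elim: converse_rtranclE)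
      then obtain y where y: "(z, y) \<in> wrel V w" by blast
      then have yV': "y \<in> V'" and wy: "0 < w z y" by (auto simp: wrel_def V'_def)
      have "w z y \<le> Wz" unfolding Wz_def
        using finV' yV' nn zV by (intro member_le_sum) (auto simp: V'_def)
      then show ?thesis using wy by simp
    qed
    define w' where "w' a c = w a c + w a z * w z c / Wz" for a c
    define b' where "b' a = b a + w a z * b z / Wz" for a
    have sym': "\<forall>u\<in>V'. \<forall>v\<in>V'. w' u v = w' v u"
      using sym zV by (auto simp: w'_def V'_def mult.commute)
    have nn': "\<forall>u\<in>V'. \<forall>v\<in>V'. 0 \<le> w' u v"
      using nn zV Wzpos by (auto simp: w'_def V'_def)
    have conn': "\<forall>u\<in>V'. \<forall>v\<in>V'. (u,v) \<in> (wrel V' w')\<^sup>*"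
    proof (intro ballI)
      fix u v assume u: "u \<in> V'" and v: "v \<in> V'"
      have uv: "(u, v) \<in> (wrel V w)\<^sup>*" using conn u v by (auto simp: V'_def)
      have "(x \<in> V' \<longrightarrow> (u,x) \<in> (wrel V' w')\<^sup>*) \<and> (x = z \<longrightarrow> (\<exists>y\<in>V'. (u,y) \<in> (wrel V' w')\<^sup>* \<and> 0 < w y z))"
        if "(u, x) \<in> (wrel V w)\<^sup>*" for x
        using that
      proof (induction rule: rtrancl_induct)
        case base
        then show ?case using u by (auto simp: V'_def)
      next
        case (step x x')
        have xx': "x \<in> V" "x' \<in> V" "x \<noteq> x'" "0 < w x x'" using step.hyps(2) by (auto simp: wrel_def)
        show ?case
        proof (intro conjI impI)
          assume x'V: "x' \<in> V'"
          show "(u, x') \<in> (wrel V' w')\<^sup>*"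
          proof (cases "x = z")
            case False
            then have xV': "x \<in> V'" using xx' by (simp add: V'_def)
            have "0 \<le> w x z * w z x' / Wz" using nn xx' zV Wzpos by auto
            then have "(x, x') \<in> wrel V' w'" using xV' x'V xx' by (auto simp: wrel_def w'_def)
            then show ?thesis using step.IH xV' by (meson rtrancl.rtrancl_into_rtrancl)
          next
            case True
            then obtain y where y: "y \<in> V'" "(u,y) \<in> (wrel V' w')\<^sup>*" "0 < w y z" using step.IH by blast
            show ?thesis
            proof (cases "y = x'")
              case True then show ?thesis using y by simp
            next
              case False
              have "0 < w y z * w z x' / Wz" using y xx' True Wzpos by auto
              moreover have "0 \<le> w y x'" using nn y x'V by (auto simp: V'_def)
              ultimately have "(y, x') \<in> wrel V' w'" using y x'V False by (auto simp: wrel_def w'_def)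
              then show ?thesis using y by (meson rtrancl.rtrancl_into_rtrancl)
            qed
          qed
        next
          assume "x' = z"
          then have xV': "x \<in> V'" using xx' by (auto simp: V'_def)
          then show "\<exists>y\<in>V'. (u, y) \<in> (wrel V' w')\<^sup>* \<and> 0 < w y z"
            using step.IH xx' \<open>x' = z\<close> by blast
        qed
      qed
      then show "(u, v) \<in> (wrel V' w')\<^sup>*" using uv v by blast
    qed
    have sumVz: "(\<Sum>u\<in>V. f u) = f z + (\<Sum>u\<in>V'. f u)" for f :: "'v \<Rightarrow> real"
      using finV zV by (simp add: V'_def sum.remove)
    have sb': "(\<Sum>v\<in>V'. b' v) = 0"
    proof -
      have "(\<Sum>v\<in>V'. b' v) = (\<Sum>v\<in>V'. b v) + (\<Sum>v\<in>V'. w z v) * b z / Wz"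
        unfolding b'_def using sym zV
        by (simp add: sum.distrib sum_divide_distrib[symmetric] sum_distrib_right V'_def)
      also have "\<dots> = (\<Sum>v\<in>V'. b v) + b z" using Wzpos by (simp add: Wz_def)
      also have "\<dots> = 0" using sb sumVz[of b] by simp
      finally show ?thesis .
    qed
    obtain h' where h': "\<forall>v\<in>V'. (\<Sum>u\<in>V'. w' v u * (h' v - h' u)) = b' v"
      using less.IH[OF cardV' refl finV' sym' nn' conn' sb'] by blast
    define Sz where "Sz = (\<Sum>u\<in>V'. w z u * h' u)"
    define h where "h = h'(z := (b z + Sz) / Wz)"
    have hV': "h u = h' u" if "u \<in> V'" for u using that by (auto simp: h_def V'_def)
    have hz: "h z = (b z + Sz) / Wz" by (simp add: h_def)
    show ?thesis
    proof (intro exI[of _ h] ballI)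
      fix v assume vV: "v \<in> V"
      show "(\<Sum>u\<in>V. w v u * (h v - h u)) = b v"
      proof (cases "v = z")
        case True
        have "(\<Sum>u\<in>V. w v u * (h v - h u)) = (\<Sum>u\<in>V'. w z u * (h z - h' u))"
          using sumVz True hV' by simp
        also have "\<dots> = Wz * h z - Sz"
          by (simp add: Wz_def Sz_def right_diff_distrib sum_subtractf sum_distrib_right)
        also have "\<dots> = b z" using hz Wzpos by (simp add: field_simps)
        finally show ?thesis using True by simp
      next
        case False
        then have vV': "v \<in> V'" using vV by (simp add: V'_def)
        define A where "A = (\<Sum>u\<in>V'. w v u * (h' v - h' u))"
        have "(\<Sum>u\<in>V'. w' v u * (h' v - h' u)) = A + (w v z / Wz) * (\<Sum>u\<in>V'. w z u * (h' v - h' u))"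
          by (simp add: A_def w'_def distrib_right sum.distrib sum_distrib_left mult.assoc)
        also have "(\<Sum>u\<in>V'. w z u * (h' v - h' u)) = Wz * h' v - Sz"
          by (simp add: Wz_def Sz_def right_diff_distrib sum_subtractf sum_distrib_right)
        finally have "A + (w v z / Wz) * (Wz * h' v - Sz) = b v + w v z * b z / Wz"
          using h' vV' by (simp add: b'_def)
        then have e1: "A * Wz + Wz * (h' v * w v z) = Wz * b v + (Sz * w v z + b z * w v z)"
          using Wzpos by (simp add: field_simps)
        have e2: "Wz * h z = Sz + b z" using hz Wzpos by (simp add: field_simps)
        have "Wz * (A + w v z * (h' v - h z)) = A * Wz + Wz * (h' v * w v z) - w v z * (Wz * h z)"
          by (simp add: algebra_simps)
        also have "\<dots> = A * Wz + Wz * (h' v * w v z) - (Sz * w v z + b z * w v z)"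
          by (simp add: e2 algebra_simps)
        also have "\<dots> = Wz * b v" using e1 by linarith
        finally have "Wz * (A + w v z * (h' v - h z)) = Wz * b v" .
        then have key: "A + w v z * (h' v - h z) = b v"
          using Wzpos by simp
        have "(\<Sum>u\<in>V. w v u * (h v - h u)) = w v z * (h' v - h z) + (\<Sum>u\<in>V'. w v u * (h' v - h' u))"
          using sumVz hV' vV' by simp
        then show ?thesis using key by (simp add: A_def)
      qed
    qed
  qed
qed



lemma edge_arith:
  fixes L d r :: real and k :: int
  assumes L: "0 < L" and kd: "k = floor (d / L)" and rd: "r = d - of_int k * L"
  shows "0 \<le> r" "r < L" "ceiling (d / L) - (if 0 < r then 1 else 0) = k"
    "real_of_int (ceiling (d / L)) * L - (if 0 < r then L - r else 0) = d"
proof -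
  have k1: "of_int k \<le> d / L" "d / L < of_int k + 1" unfolding kd
    using floor_correct[of "d/L"] by auto
  then have k2: "of_int k * L \<le> d" "d < of_int k * L + L" using L by (auto simp: field_simps)
  then show r0: "0 \<le> r" "r < L" by (auto simp: rd)
  have c: "ceiling (d / L) = (if 0 < r then k + 1 else k)"
  proof (cases "0 < r")
    case True
    have "d / L \<noteq> of_int k"
    proof
      assume "d / L = of_int k"
      then have "d = of_int k * L" using L by (simp add: field_simps)
      then show False using True rd by simp
    qed
    then show ?thesis using True by (simp add: ceiling_altdef kd)
  next
    case False
    then have "r = 0" using r0 by simp
    then have "d = of_int k * L" using rd by simp
    then have "d / L = of_int k" using L by simp
    then show ?thesis using False by (simp add: ceiling_altdef kd)
  qed
  then show "ceiling (d / L) - (if 0 < r then 1 else 0) = k" by simp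
  show "real_of_int (ceiling (d / L)) * L - (if 0 < r then L - r else 0) = d"
  proof (cases "0 < r")
    case True then show ?thesis using c rd by (simp add: algebra_simps)
  next
    case False then have "r = 0" using r0 by simp
    then show ?thesis using c rd False by (simp add: algebra_simps)
  qed
qed

definition edge_w :: "'e set \<Rightarrow> ('e \<Rightarrow> 'v) \<Rightarrow> ('e \<Rightarrow> 'v) \<Rightarrow> ('e \<Rightarrow> real) \<Rightarrow> 'v \<Rightarrow> 'v \<Rightarrow> real" where
  "edge_w E src tgt len a c = (\<Sum>e\<in>{e\<in>E. tgt e = a \<and> src e = c}. 1 / len e) + (\<Sum>e\<in>{e\<in>E. src e = a \<and> tgt e = c}. 1 / len e)"

lemma lap_expand:
  assumes finV: "finite V" and finE: "finite E" and st: "\<forall>e\<in>E. src e \<in> V \<and> tgt e \<in> V"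
  shows "(\<Sum>u\<in>V. edge_w E src tgt len v u * (h v - h u)) =
    (\<Sum>e\<in>{e\<in>E. tgt e = v}. (h v - h (src e)) / len e) + (\<Sum>e\<in>{e\<in>E. src e = v}. (h v - h (tgt e)) / len e)"
proof -
  have "(\<Sum>u\<in>V. edge_w E src tgt len v u * (h v - h u)) =
     (\<Sum>u\<in>V. \<Sum>e\<in>{e\<in>{e\<in>E. tgt e = v}. src e = u}. (h v - h (src e)) / len e)
   + (\<Sum>u\<in>V. \<Sum>e\<in>{e\<in>{e\<in>E. src e = v}. tgt e = u}. (h v - h (tgt e)) / len e)"
    unfolding edge_w_def distrib_right sum.distrib
  proof (intro arg_cong2[where f="(+)"] sum.cong refl)
    fix u assume "u \<in> V"
    show "(\<Sum>e\<in>{e\<in>E. tgt e = v \<and> src e = u}. 1 / len e) * (h v - h u) =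
       (\<Sum>e\<in>{e\<in>{e\<in>E. tgt e = v}. src e = u}. (h v - h (src e)) / len e)"
      by (simp add: sum_distrib_right conj_commute) (intro sum.cong; auto)
    show "(\<Sum>e\<in>{e\<in>E. src e = v \<and> tgt e = u}. 1 / len e) * (h v - h u) =
       (\<Sum>e\<in>{e\<in>{e\<in>E. src e = v}. tgt e = u}. (h v - h (tgt e)) / len e)"
      by (simp add: sum_distrib_right conj_commute) (intro sum.cong; auto)
  qed
  also have "\<dots> = (\<Sum>e\<in>{e\<in>E. tgt e = v}. (h v - h (src e)) / len e) + (\<Sum>e\<in>{e\<in>E. src e = v}. (h v - h (tgt e)) / len e)"
    using finV finE st
    by (intro arg_cong2[where f="(+)"] sum.group) auto
  finally show ?thesis .
qed



lemma linsys_big: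
  fixes V :: "'v set" and E :: "'e set" and src tgt :: "'e \<Rightarrow> 'v" and len :: "'e \<Rightarrow> real"
  assumes tc: "tropical_curve V E src tgt len" and D: "is_divisor V E len D"
    and dg: "deg D \<ge> 2 * int (card E)"
  shows "linsys_nonempty V E src tgt len D"
proof -
  have finV: "finite V" and finE: "finite E" and Vne: "V \<noteq> {}"
    and st0: "\<forall>e\<in>E. src e \<in> V \<and> tgt e \<in> V \<and> len e > 0"
    and conn0: "\<forall>u\<in>V. \<forall>w\<in>V. (u, w) \<in> ({(src e, tgt e) | e. e \<in> E} \<union> {(tgt e, src e) | e. e \<in> E})\<^sup>*"
    using tc unfolding tropical_curve_def by blast+
  have st: "\<forall>e\<in>E. src e \<in> V \<and> tgt e \<in> V" using st0 by blast
  have lpos: "\<forall>e\<in>E. 0 < len e" using st0 by blast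
  have finD: "finite {x. D x \<noteq> 0}" and subD: "{x. D x \<noteq> 0} \<subseteq> points V E len"
    using D by (auto simp: is_divisor_def)
  define Se where "Se e = {p. D (Inner e p) \<noteq> 0}" for e
  have finSe: "finite (Se e)" for e
  proof -
    have "Se e = Inner e -` {x. D x \<noteq> 0}" by (auto simp: Se_def)
    moreover have "finite (Inner e -` {x. D x \<noteq> 0})" using finD by (intro finite_vimageI) (auto simp: inj_def)
    ultimately show ?thesis by simp
  qed
  have Sesub: "Se e \<subseteq> {0<..<len e}" for e
    using subD by (force simp: Se_def)
  define ne where "ne e = (\<Sum>p\<in>Se e. D (Inner e p))" for e
  define phi where "phi e = (\<Sum>p\<in>Se e. real_of_int (D (Inner e p)) * (len e - p))" for e
  define dv where "dv v = card {e\<in>E. src e = v} + card {e\<in>E. tgt e = v}" for v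
  define psi where "psi v = (\<Sum>e\<in>{e\<in>E. src e = v}. phi e / len e) - (\<Sum>e\<in>{e\<in>E. tgt e = v}. phi e / len e)" for v
  define s where "s = (real_of_int (deg D) - 2 * real (card E)) / real (card V)"
  define b where "b v = real (dv v) - real_of_int (D (Vert v)) - (\<Sum>e\<in>{e\<in>E. tgt e = v}. real_of_int (ne e)) - psi v + s" for v
  define w where "w = edge_w E src tgt len"
  have cardV: "0 < card V" using finV Vne by (simp add: card_gt_0_iff)
  have s0: "0 \<le> s" unfolding s_def using dg cardV by (intro divide_nonneg_pos) auto
  have degD: "deg D = (\<Sum>v\<in>V. D (Vert v)) + (\<Sum>e\<in>E. ne e)"
    unfolding deg_def ne_def Se_def by (rule supp_decomp[OF finV finE finD subD])
  have sumb: "(\<Sum>v\<in>V. b v) = 0"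
  proof -
    have c1: "(\<Sum>v\<in>V. real (card {e\<in>E. src e = v})) = real (card E)"
      using sum_group_src[of V E src "\<lambda>_. 1::real"] finV finE st by simp
    have c2: "(\<Sum>v\<in>V. real (card {e\<in>E. tgt e = v})) = real (card E)"
      using sum_group_src[of V E tgt "\<lambda>_. 1::real"] finV finE st by simp
    have sdv: "(\<Sum>v\<in>V. real (dv v)) = 2 * real (card E)"
      using c1 c2 by (simp add: dv_def sum.distrib)
    have sne: "(\<Sum>v\<in>V. \<Sum>e\<in>{e\<in>E. tgt e = v}. real_of_int (ne e)) = (\<Sum>e\<in>E. real_of_int (ne e))"
      using sum_group_src[of V E tgt "\<lambda>e. real_of_int (ne e)"] finV finE st by simp
    have spsi: "(\<Sum>v\<in>V. psi v) = 0"
      using sum_group_src[of V E src "\<lambda>e. phi e / len e"] sum_group_src[of V E tgt "\<lambda>e. phi e / len e"] finV finE st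
      by (simp add: psi_def sum_subtractf)
    have sD: "(\<Sum>v\<in>V. real_of_int (D (Vert v))) + (\<Sum>e\<in>E. real_of_int (ne e)) = real_of_int (deg D)"
      using degD by simp
    have ss: "(\<Sum>v\<in>V. s) = real_of_int (deg D) - 2 * real (card E)"
      using cardV by (simp add: s_def)
    show ?thesis
      unfolding b_def using sdv sne spsi sD ss by (simp add: sum.distrib sum_subtractf)
  qed
  have wsym: "\<forall>u\<in>V. \<forall>v\<in>V. w u v = w v u"
    by (auto simp: w_def edge_w_def conj_commute add.commute)
  have wnn: "\<forall>u\<in>V. \<forall>v\<in>V. 0 \<le> w u v"
    using lpos by (auto simp: w_def edge_w_def intro!: add_nonneg_nonneg sum_nonneg)
  have wpos: "0 < w (src e) (tgt e)" "0 < w (tgt e) (src e)" if "e \<in> E" for e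
  proof -
    have fin: "finite {e'\<in>E. src e' = src e \<and> tgt e' = tgt e}" "finite {e'\<in>E. tgt e' = src e \<and> src e' = tgt e}"
      "finite {e'\<in>E. tgt e' = tgt e \<and> src e' = src e}" "finite {e'\<in>E. src e' = tgt e \<and> tgt e' = src e}"
      using finE by auto
    have "1 / len e \<le> (\<Sum>e'\<in>{e'\<in>E. src e' = src e \<and> tgt e' = tgt e}. 1 / len e')"
      using that lpos fin by (intro member_le_sum) auto
    moreover have "0 \<le> (\<Sum>e'\<in>{e'\<in>E. tgt e' = src e \<and> src e' = tgt e}. 1 / len e')"
      using lpos by (intro sum_nonneg) auto
    moreover have "0 < 1 / len e" using that lpos by auto
    ultimately show "0 < w (src e) (tgt e)" unfolding w_def edge_w_def by linarith
    have "1 / len e \<le> (\<Sum>e'\<in>{e'\<in>E. tgt e' = tgt e \<and> src e' = src e}. 1 / len e')"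
      using that lpos fin by (intro member_le_sum) auto
    moreover have "0 \<le> (\<Sum>e'\<in>{e'\<in>E. src e' = tgt e \<and> tgt e' = src e}. 1 / len e')"
      using lpos by (intro sum_nonneg) auto
    ultimately show "0 < w (tgt e) (src e)" using \<open>0 < 1 / len e\<close> unfolding w_def edge_w_def by linarith
  qed
  have wconn: "\<forall>u\<in>V. \<forall>v\<in>V. (u, v) \<in> (wrel V w)\<^sup>*"
  proof -
    have "({(src e, tgt e) | e. e \<in> E} \<union> {(tgt e, src e) | e. e \<in> E}) \<subseteq> (wrel V w)\<^sup>*"
    proof
      fix x assume "x \<in> {(src e, tgt e) | e. e \<in> E} \<union> {(tgt e, src e) | e. e \<in> E}"
      then obtain e where e: "e \<in> E" "x = (src e, tgt e) \<or> x = (tgt e, src e)" by blast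
      show "x \<in> (wrel V w)\<^sup>*"
      proof (cases "src e = tgt e")
        case True then show ?thesis using e by auto
      next
        case False
        then have "(src e, tgt e) \<in> wrel V w" "(tgt e, src e) \<in> wrel V w"
          using wpos[OF e(1)] st e(1) by (auto simp: wrel_def)
        then show ?thesis using e by auto
      qed
    qed
    then have "({(src e, tgt e) | e. e \<in> E} \<union> {(tgt e, src e) | e. e \<in> E})\<^sup>* \<subseteq> (wrel V w)\<^sup>*"
      by (rule rtrancl_subset_rtrancl)
    then show ?thesis using conn0 by blast
  qed
  obtain h where hl: "\<forall>v\<in>V. (\<Sum>u\<in>V. w v u * (h v - h u)) = b v"
    using lap_solve_aux[OF refl finV wsym wnn wconn sumb] by blast
  have lap: "(\<Sum>e\<in>{e\<in>E. tgt e = v}. (h v - h (src e)) / len e) + (\<Sum>e\<in>{e\<in>E. src e = v}. (h v - h (tgt e)) / len e) = b v"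
    if "v \<in> V" for v
    using hl that lap_expand[OF finV finE st, of len v h] by (simp add: w_def)
  define dl where "dl e = h (tgt e) - h (src e) - phi e" for e
  define k where "k e = floor (dl e / len e)" for e
  define r where "r e = dl e - of_int (k e) * len e" for e
  have ea: "0 \<le> r e" "r e < len e" "ceiling (dl e / len e) - (if 0 < r e then 1 else 0) = k e"
    "real_of_int (ceiling (dl e / len e)) * len e - (if 0 < r e then len e - r e else 0) = dl e"
    if "e \<in> E" for e
    using edge_arith[of "len e" "k e" "dl e" "r e"] lpos that by (auto simp: k_def r_def)
  define Pe where "Pe e = insert 0 (insert (r e) (Se e))" for e
  define c1 :: "'e \<Rightarrow> real \<Rightarrow> int" where "c1 e p = (if p = 0 then ceiling (dl e / len e) else 0)" for e p
  define c2 :: "'e \<Rightarrow> real \<Rightarrow> int" where "c2 e p = (if p \<in> Se e then D (Inner e p) else 0)" for e p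
  define c3 :: "'e \<Rightarrow> real \<Rightarrow> int" where "c3 e p = (if 0 < r e \<and> p = r e then 1 else (0::int))" for e p
  define c :: "'e \<Rightarrow> real \<Rightarrow> int" where "c e p = c1 e p + c2 e p - c3 e p" for e p
  have finPe: "finite (Pe e)" for e using finSe by (simp add: Pe_def)
  have Pesub: "Pe e \<subseteq> {0..<len e}" if "e \<in> E" for e
    using ea[OF that] Sesub[of e] lpos that by (auto simp: Pe_def)
  have P0: "0 \<in> Pe e" for e by (simp add: Pe_def)
  have SePe: "Se e \<subseteq> Pe e" for e by (auto simp: Pe_def)
  have S0: "0 \<notin> Se e" for e using Sesub[of e] by auto
  have sc1: "(\<Sum>p\<in>Pe e. c1 e p) = ceiling (dl e / len e)"
    "(\<Sum>p\<in>Pe e. real_of_int (c1 e p) * (len e - p)) = real_of_int (ceiling (dl e / len e)) * len e" for e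
  proof -
    have "(\<Sum>p\<in>Pe e. c1 e p) = (\<Sum>p\<in>Pe e. if p = 0 then ceiling (dl e / len e) else 0)"
      by (intro sum.cong) (auto simp: c1_def)
    then show "(\<Sum>p\<in>Pe e. c1 e p) = ceiling (dl e / len e)" using finPe P0 by (simp add: sum.delta)
    have "(\<Sum>p\<in>Pe e. real_of_int (c1 e p) * (len e - p)) = (\<Sum>p\<in>Pe e. if p = 0 then real_of_int (ceiling (dl e / len e)) * (len e - p) else 0)"
      by (intro sum.cong) (auto simp: c1_def)
    then show "(\<Sum>p\<in>Pe e. real_of_int (c1 e p) * (len e - p)) = real_of_int (ceiling (dl e / len e)) * len e"
      using finPe P0 by (simp add: sum.delta)
  qed
  have sc2: "(\<Sum>p\<in>Pe e. c2 e p) = ne e" "(\<Sum>p\<in>Pe e. real_of_int (c2 e p) * (len e - p)) = phi e" for e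
  proof -
    have "(\<Sum>p\<in>Pe e. c2 e p) = (\<Sum>p\<in>Pe e \<inter> Se e. D (Inner e p))"
      unfolding c2_def using finPe by (simp add: sum.inter_restrict)
    then show "(\<Sum>p\<in>Pe e. c2 e p) = ne e" using SePe[of e] by (simp add: ne_def Int_absorb1)
    have "(\<Sum>p\<in>Pe e. real_of_int (c2 e p) * (len e - p)) = (\<Sum>p\<in>Pe e \<inter> Se e. real_of_int (D (Inner e p)) * (len e - p))"
    proof -
      have "(\<Sum>p\<in>Pe e. real_of_int (c2 e p) * (len e - p)) = (\<Sum>p\<in>Pe e. if p \<in> Se e then real_of_int (D (Inner e p)) * (len e - p) else 0)"
        by (intro sum.cong) (auto simp: c2_def)
      then show ?thesis using finPe by (simp add: sum.inter_restrict)
    qed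
    then show "(\<Sum>p\<in>Pe e. real_of_int (c2 e p) * (len e - p)) = phi e" using SePe[of e] by (simp add: phi_def Int_absorb1)
  qed
  have sc3: "(\<Sum>p\<in>Pe e. c3 e p) = (if 0 < r e then 1 else 0)"
    "(\<Sum>p\<in>Pe e. real_of_int (c3 e p) * (len e - p)) = (if 0 < r e then len e - r e else 0)" for e
  proof -
    have rP: "r e \<in> Pe e" by (simp add: Pe_def)
    show "(\<Sum>p\<in>Pe e. c3 e p) = (if 0 < r e then 1 else 0)"
    proof (cases "0 < r e")
      case True then show ?thesis using finPe rP by (simp add: c3_def sum.delta')
    next
      case False then show ?thesis by (simp add: c3_def)
    qed
    show "(\<Sum>p\<in>Pe e. real_of_int (c3 e p) * (len e - p)) = (if 0 < r e then len e - r e else 0)"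
    proof (cases "0 < r e")
      case True
      have "(\<Sum>p\<in>Pe e. real_of_int (c3 e p) * (len e - p)) = (\<Sum>p\<in>Pe e. if p = r e then len e - p else 0)"
        using True by (intro sum.cong) (auto simp: c3_def)
      then show ?thesis using finPe rP True by (simp add: sum.delta)
    next
      case False then show ?thesis by (simp add: c3_def)
    qed
  qed
  have cons: "h (src e) + (\<Sum>p\<in>Pe e. real_of_int (c e p) * (len e - p)) = h (tgt e)" if "e \<in> E" for e
  proof -
    have "(\<Sum>p\<in>Pe e. real_of_int (c e p) * (len e - p)) =
      (\<Sum>p\<in>Pe e. real_of_int (c1 e p) * (len e - p)) + (\<Sum>p\<in>Pe e. real_of_int (c2 e p) * (len e - p))
      - (\<Sum>p\<in>Pe e. real_of_int (c3 e p) * (len e - p))"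
      by (simp add: c_def distrib_right left_diff_distrib sum.distrib sum_subtractf)
    also have "\<dots> = dl e + phi e" using sc1 sc2 sc3 ea(4)[OF that] by simp
    finally show ?thesis by (simp add: dl_def)
  qed
  have c0: "c e 0 = ceiling (dl e / len e)" for e
    using S0[of e] by (simp add: c_def c1_def c2_def c3_def)
  have csum: "(\<Sum>p\<in>Pe e. c e p) = k e + ne e" if "e \<in> E" for e
  proof -
    have "(\<Sum>p\<in>Pe e. c e p) = (\<Sum>p\<in>Pe e. c1 e p) + (\<Sum>p\<in>Pe e. c2 e p) - (\<Sum>p\<in>Pe e. c3 e p)"
      by (simp add: c_def sum.distrib sum_subtractf)
    then show ?thesis using sc1 sc2 sc3 ea(3)[OF that] by simp
  qed
  define f where "f = ramp_fun src h c Pe"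
  have PLf: "is_PL E src tgt len f"
    unfolding f_def using lpos Pesub finPe P0 cons by (intro ramp_PL) auto
  define Dc where "Dc x = (case x of Vert v \<Rightarrow> - (\<Sum>e\<in>{e\<in>E. src e = v}. c e 0) + (\<Sum>e\<in>{e\<in>E. tgt e = v}. \<Sum>p\<in>Pe e. c e p)
      | Inner e t \<Rightarrow> - (if t \<in> Pe e then c e t else 0))" for x
  define Dn where "Dn x = (if x \<in> points V E len then D x + Dc x else 0)" for x
  have eqdiv: "\<forall>x\<in>points V E len. real_of_int (Dn x - D x) = divf V E src tgt len f x"
  proof
    fix x assume xp: "x \<in> points V E len"
    show "real_of_int (Dn x - D x) = divf V E src tgt len f x"
    proof (cases x)
      case (Vert v)
      then have v: "v \<in> V" using xp by simp
      have "divf V E src tgt len f x = - (\<Sum>e\<in>{e\<in>E. src e = v}. real_of_int (c e 0)) + (\<Sum>e\<in>{e\<in>E. tgt e = v}. real_of_int (\<Sum>p\<in>Pe e. c e p))"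
        unfolding f_def Vert using lpos Pesub finPe P0 cons v by (intro ramp_divf_vert) auto
      then show ?thesis using xp Vert by (simp add: Dn_def Dc_def)
    next
      case (Inner e t)
      then have et: "e \<in> E" "0 < t" "t < len e" using xp by auto
      have "divf V E src tgt len f x = - (if t \<in> Pe e then real_of_int (c e t) else 0)"
        unfolding f_def Inner using Pesub[OF et(1)] finPe cons[OF et(1)] et by (intro ramp_divf_inner) auto
      then show ?thesis using xp Inner by (simp add: Dn_def Dc_def)
    qed
  qed
  have divn: "is_divisor V E len Dn"
  proof -
    have "{x. Dn x \<noteq> 0} \<subseteq> Vert ` V \<union> (\<Union>e\<in>E. Inner e ` Pe e)"
    proof
      fix x assume x: "x \<in> {x. Dn x \<noteq> 0}"
      then have xp: "x \<in> points V E len" by (auto simp: Dn_def split: if_splits)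
      show "x \<in> Vert ` V \<union> (\<Union>e\<in>E. Inner e ` Pe e)"
      proof (cases x)
        case (Vert v) then show ?thesis using xp by auto
      next
        case (Inner e t)
        have "t \<in> Pe e"
        proof (rule ccontr)
          assume nt: "t \<notin> Pe e"
          then have "t \<notin> Se e" using SePe by auto
          then have "D x = 0" using Inner by (simp add: Se_def)
          then have "Dn x = 0" using nt Inner by (simp add: Dn_def Dc_def)
          then show False using x by simp
        qed
        then show ?thesis using xp Inner by auto
      qed
    qed
    moreover have "finite (Vert ` V \<union> (\<Union>e\<in>E. Inner e ` Pe e))" using finV finE finPe by simp
    ultimately have "finite {x. Dn x \<noteq> 0}" by (rule finite_subset)
    moreover have "{x. Dn x \<noteq> 0} \<subseteq> points V E len" by (auto simp: Dn_def split: if_splits)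
    ultimately show ?thesis by (simp add: is_divisor_def)
  qed
  have effv: "0 \<le> Dn (Vert v)" if v: "v \<in> V" for v
  proof -
    define q where "q e = dl e / len e" for e
    have "Dn (Vert v) = D (Vert v) - (\<Sum>e\<in>{e\<in>E. src e = v}. ceiling (q e)) + (\<Sum>e\<in>{e\<in>E. tgt e = v}. k e + ne e)"
      using v csum by (simp add: Dn_def Dc_def c0 q_def)
    then have "real_of_int (Dn (Vert v)) = real_of_int (D (Vert v)) - (\<Sum>e\<in>{e\<in>E. src e = v}. real_of_int (ceiling (q e)))
       + (\<Sum>e\<in>{e\<in>E. tgt e = v}. real_of_int (k e) + real_of_int (ne e))" by simp
    also have "\<dots> \<ge> real_of_int (D (Vert v)) - (\<Sum>e\<in>{e\<in>E. src e = v}. q e + 1)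
       + (\<Sum>e\<in>{e\<in>E. tgt e = v}. (q e - 1) + real_of_int (ne e))"
    proof -
      have "(\<Sum>e\<in>{e\<in>E. src e = v}. real_of_int (ceiling (q e))) \<le> (\<Sum>e\<in>{e\<in>E. src e = v}. q e + 1)"
        by (intro sum_mono of_int_ceiling_le_add_one)
      moreover have "(\<Sum>e\<in>{e\<in>E. tgt e = v}. (q e - 1) + real_of_int (ne e)) \<le> (\<Sum>e\<in>{e\<in>E. tgt e = v}. real_of_int (k e) + real_of_int (ne e))"
        using real_of_int_floor_gt_diff_one by (intro sum_mono) (auto simp: k_def q_def less_imp_le)
      ultimately show ?thesis by linarith
    qed
    also have "real_of_int (D (Vert v)) - (\<Sum>e\<in>{e\<in>E. src e = v}. q e + 1)
       + (\<Sum>e\<in>{e\<in>E. tgt e = v}. (q e - 1) + real_of_int (ne e))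
       = real_of_int (D (Vert v)) - real (dv v) + (\<Sum>e\<in>{e\<in>E. tgt e = v}. real_of_int (ne e))
         + ((\<Sum>e\<in>{e\<in>E. tgt e = v}. q e) - (\<Sum>e\<in>{e\<in>E. src e = v}. q e))"
      by (simp add: sum.distrib sum_subtractf dv_def)
    also have "(\<Sum>e\<in>{e\<in>E. tgt e = v}. q e) - (\<Sum>e\<in>{e\<in>E. src e = v}. q e) = b v + psi v"
    proof -
      have t1: "(\<Sum>e\<in>{e\<in>E. tgt e = v}. q e) = (\<Sum>e\<in>{e\<in>E. tgt e = v}. (h v - h (src e)) / len e) - (\<Sum>e\<in>{e\<in>E. tgt e = v}. phi e / len e)"
        by (simp add: sum_subtractf[symmetric] q_def dl_def diff_divide_distrib)
      have t2: "(\<Sum>e\<in>{e\<in>E. src e = v}. q e) = - (\<Sum>e\<in>{e\<in>E. src e = v}. (h v - h (tgt e)) / len e) - (\<Sum>e\<in>{e\<in>E. src e = v}. phi e / len e)"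
        by (simp add: sum_subtractf[symmetric] sum_negf[symmetric] q_def dl_def diff_divide_distrib)
      show ?thesis using t1 t2 lap[OF v] by (simp add: psi_def)
    qed
    also have "real_of_int (D (Vert v)) - real (dv v) + (\<Sum>e\<in>{e\<in>E. tgt e = v}. real_of_int (ne e)) + (b v + psi v) = s"
      by (simp add: b_def)
    finally have "s \<le> real_of_int (Dn (Vert v))" .
    then show ?thesis using s0 by linarith
  qed
  have eff: "effective Dn"
    unfolding effective_def
  proof
    fix x show "0 \<le> Dn x"
    proof (cases "x \<in> points V E len")
      case False then show ?thesis by (simp add: Dn_def)
    next
      case True
      show ?thesis
      proof (cases x)
        case (Vert v) then show ?thesis using True effv by simp
      next
        case (Inner e t)
        then have et: "e \<in> E" "0 < t" "t < len e" using True by auto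
        have "c e t = c2 e t - c3 e t" using et by (simp add: c_def c1_def)
        then show ?thesis using True Inner et
          by (auto simp: Dn_def Dc_def c2_def c3_def Se_def Pe_def)
      qed
    qed
  qed
  show ?thesis
    unfolding linsys_nonempty_def lin_equiv_def
    using divn eff PLf eqdiv by blast
qed



lemma deg_diff:
  assumes "finite {x. D x \<noteq> 0}" "finite {x. F x \<noteq> 0}"
  shows "deg (\<lambda>x. D x - F x) = deg D - deg F"
proof -
  define S where "S = {x. D x \<noteq> 0} \<union> {x. F x \<noteq> 0}"
  have fS: "finite S" using assms by (simp add: S_def)
  have "deg (\<lambda>x. D x - F x) = (\<Sum>x\<in>S. D x - F x)" by (rule deg_superset[OF fS]) (auto simp: S_def)
  also have "\<dots> = (\<Sum>x\<in>S. D x) - (\<Sum>x\<in>S. F x)" by (simp add: sum_subtractf)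
  also have "(\<Sum>x\<in>S. D x) = deg D" by (rule deg_superset[OF fS, symmetric]) (auto simp: S_def)
  also have "(\<Sum>x\<in>S. F x) = deg F" by (rule deg_superset[OF fS, symmetric]) (auto simp: S_def)
  finally show ?thesis .
qed

lemma deg_effective_nonneg: "effective D \<Longrightarrow> 0 \<le> deg D"
  unfolding deg_def effective_def by (intro sum_nonneg) auto

lemma divisor_diff:
  assumes "is_divisor V E len D" "is_divisor V E len F"
  shows "is_divisor V E len (\<lambda>x. D x - F x)"
proof -
  have "{x. D x - F x \<noteq> 0} \<subseteq> {x. D x \<noteq> 0} \<union> {x. F x \<noteq> 0}" by auto
  then show ?thesis using assms unfolding is_divisor_def by (meson finite_Un finite_subset order_trans le_sup_iff)
qed

theorem proposition3p3:
  fixes V :: "'v set" and E :: "'e set" and src tgt :: "'e \<Rightarrow> 'v" and len :: "'e \<Rightarrow> real"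
  assumes "tropical_curve V E src tgt len"
  shows "\<exists>c :: nat. \<forall>D. is_divisor V E len D \<longrightarrow>
           BN_rank V E src tgt len D \<ge> deg D - int c"
proof (intro exI[of _ "2 * card E"] allI impI)
  fix D assume D: "is_divisor V E len D"
  have tc: "tropical_curve V E src tgt len" by fact
  have finV: "finite V" and finE: "finite E" and Vne: "V \<noteq> {}"
    and st: "\<forall>e\<in>E. src e \<in> V \<and> tgt e \<in> V"
    using tc unfolding tropical_curve_def by blast+
  show "BN_rank V E src tgt len D \<ge> deg D - int (2 * card E)"
  proof (cases "deg D \<ge> 2 * int (card E)")
    case False
    have "BN_rank V E src tgt len D \<ge> -1" unfolding BN_rank_def by simp
    then show ?thesis using False by simp
  next
    case True
    have ne: "linsys_nonempty V E src tgt len D" by (rule linsys_big[OF tc D True])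
    define P where "P d = (\<forall>F. is_divisor V E len F \<and> effective F \<and> deg F = int d
                 \<longrightarrow> linsys_nonempty V E src tgt len (\<lambda>x. D x - F x))" for d
    define k where "k = nat (deg D - 2 * int (card E))"
    have Pk: "P k" unfolding P_def
    proof (intro allI impI)
      fix F assume F: "is_divisor V E len F \<and> effective F \<and> deg F = int k"
      have "deg (\<lambda>x. D x - F x) = deg D - deg F"
        using D F by (intro deg_diff) (auto simp: is_divisor_def)
      then have "deg (\<lambda>x. D x - F x) \<ge> 2 * int (card E)" using F True by (simp add: k_def)
      then show "linsys_nonempty V E src tgt len (\<lambda>x. D x - F x)"
        using linsys_big[OF tc divisor_diff[OF D]] F by blast
    qed
    have bnd: "d \<le> nat (deg D)" if Pd: "P d" for d
    proof -
      obtain v0 where v0: "v0 \<in> V" using Vne by blast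
      define F :: "('v,'e) pt \<Rightarrow> int" where "F x = (if x = Vert v0 then int d else 0)" for x
      have Fdiv: "is_divisor V E len F"
      proof -
        have "{x. F x \<noteq> 0} \<subseteq> {Vert v0}" by (auto simp: F_def)
        then show ?thesis using v0 unfolding is_divisor_def by (auto intro: finite_subset)
      qed
      have Feff: "effective F" by (simp add: effective_def F_def)
      have Fdeg: "deg F = int d" by (subst deg_superset[of "{Vert v0}"]) (auto simp: F_def)
      have "linsys_nonempty V E src tgt len (\<lambda>x. D x - F x)" using Pd Fdiv Feff Fdeg by (simp add: P_def)
      then obtain D' f where D': "is_divisor V E len D'" "effective D'" "is_PL E src tgt len f"
        "\<forall>x\<in>points V E len. real_of_int (D' x - (D x - F x)) = divf V E src tgt len f x"
        unfolding linsys_nonempty_def lin_equiv_def by blast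
      have "deg D' = deg (\<lambda>x. D x - F x)"
        using deg_principal[OF finV finE st D'(1) divisor_diff[OF D Fdiv] D'(3) D'(4)] .
      also have "\<dots> = deg D - int d" using D Fdiv Fdeg by (subst deg_diff) (auto simp: is_divisor_def)
      finally have "0 \<le> deg D - int d" using deg_effective_nonneg[OF D'(2)] by simp
      then show ?thesis by simp
    qed
    have "k \<le> Greatest P" by (rule Greatest_le_nat[of P k "nat (deg D)", OF Pk bnd])
    moreover have "BN_rank V E src tgt len D = int (Greatest P)"
      using ne unfolding BN_rank_def P_def by simp
    ultimately show ?thesis using True by (simp add: k_def)
  qed
qed

end
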